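(* Let $(V,\nu,\tau,\tau^* )$ be a PN space in which $\nu(V)\subseteq D^+$ and $D^+$ is invariant under $\tau$, i.e. $\tau(D^+\times D^+)\subseteq D^+$. If $(p_m)$ is a sequence in $V$ strongly converging to $p\in V$ and $A=\{p_m: m\in\mathbb{N}\}$, then $A$ is a $D$-bounded subset of $V$.
   Context: $\Delta^{+}$ is the set of functions $F:[-\infty,+\infty]\to[0,1]$ that are left-continuous on $\mathbb{R}$, nondecreasing, with $F(0)=0$ and $F(+\infty)=1$, ordered pointwise; $D^{+}=\{F\in\Delta^{+}: l^{-}F(+\infty)=1\}$, where $l^{-}f(x)=\lim_{t\to x^{-}}f(t)$. $\varepsilon_0$ is the d.f. equal to $0$ for $x\le0$ and $1$ for $x>0$. A triangle function is a map $\tau:\Delta^+\times\Delta^+\to\Delta^+$ that is associative, commutative, nondecreasing in each argument, with unit $\varepsilon_0$. A PN space is a quadruple $(V,\nu,\tau,\tau^* )$ with $V$ a real vector space, $\tau\le\tau^*$ continuous triangle functions, and $\nu:V\to\Delta^+$ such that for all $p,q\in V$: (N1) $\nu_p=\varepsilon_0$ iff $p=\theta$; (N2) $\nu_{-p}=\nu_p$; (N3) $\nu_{p+q}\ge\tau(\nu_p,\nu_q)$; (N4) $\nu_p\le\tau^*(\nu_{\lambda p},\nu_{(1-\lambda)p})$ for all $\lambda\in[0,1]$. A sequence $(p_m)$ strongly converges to $p$ if for every $\lambda>0$ there is $N$ with $\nu_{p_m-p}(\lambda)>1-\lambda$ for $m\ge N$. For nonempty $A\subseteq V$, $R_A(x)=l^{-}\inf\{\nu_q(x):q\in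 A\}$ for $x\in[0,+\infty)$ and $R_A(+\infty)=1$; $A$ is $D$-bounded if $R_A\in D^+$. *)

theory Defs
  imports "HOL-Analysis.Analysis" "HOL-Library.Extended_Real"
begin

type_synonym dfun = "ereal \<Rightarrow> real"

definition Delta_plus :: "dfun set" where
  "Delta_plus = {F. (\<forall>x. 0 \<le> F x \<and> F x \<le> 1) \<and> mono F
      \<and> (\<forall>x::real. continuous (at_left x) (\<lambda>t. F (ereal t)))
      \<and> F 0 = 0 \<and> F PInfty = 1}"

definition D_plus :: "dfun set" where
  "D_plus = {F. F \<in> Delta_plus \<and> ((\<lambda>t::real. F (ereal t)) \<longlongrightarrow> 1) at_top}"

definition eps0 :: dfun where
  "eps0 = (\<lambda>x. if x \<le> 0 then 0 else 1)"

definition triangle_function :: "(dfun \<Rightarrow> dfun \<Rightarrow> dfun) \<Rightarrow> bool" where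
  "triangle_function \<tau> \<longleftrightarrow>
     (\<forall>F\<in>Delta_plus. \<forall>G\<in>Delta_plus. \<tau> F G \<in> Delta_plus)
   \<and> (\<forall>F\<in>Delta_plus. \<forall>G\<in>Delta_plus. \<forall>H\<in>Delta_plus. \<tau> (\<tau> F G) H = \<tau> F (\<tau> G H))
   \<and> (\<forall>F\<in>Delta_plus. \<forall>G\<in>Delta_plus. \<tau> F G = \<tau> G F)
   \<and> (\<forall>F\<in>Delta_plus. \<forall>F'\<in>Delta_plus. \<forall>G\<in>Delta_plus. F \<le> F' \<longrightarrow> \<tau> F G \<le> \<tau> F' G)
   \<and> (\<forall>F\<in>Delta_plus. \<tau> F eps0 = F)"

text \<open>Weak convergence in Delta+ (the topology of the modified Levy metric):
  convergence at every continuity point in (0, +infinity) of the limit.\<close>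
definition weak_conv :: "(nat \<Rightarrow> dfun) \<Rightarrow> dfun \<Rightarrow> bool" where
  "weak_conv Fs F \<longleftrightarrow> (\<forall>x::real. x > 0 \<longrightarrow> isCont (\<lambda>t. F (ereal t)) x \<longrightarrow>
       (\<lambda>n. Fs n (ereal x)) \<longlonglongrightarrow> F (ereal x))"

definition continuous_tf :: "(dfun \<Rightarrow> dfun \<Rightarrow> dfun) \<Rightarrow> bool" where
  "continuous_tf \<tau> \<longleftrightarrow> (\<forall>Fs Gs F G. (\<forall>n. Fs n \<in> Delta_plus) \<longrightarrow> (\<forall>n. Gs n \<in> Delta_plus)
      \<longrightarrow> F \<in> Delta_plus \<longrightarrow> G \<in> Delta_plus \<longrightarrow> weak_conv Fs F \<longrightarrow> weak_conv Gs G
      \<longrightarrow> weak_conv (\<lambda>n. \<tau> (Fs n) (Gs n)) (\<tau> F G))"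

definition pn_space :: "('a::real_vector \<Rightarrow> dfun) \<Rightarrow> (dfun \<Rightarrow> dfun \<Rightarrow> dfun) \<Rightarrow> (dfun \<Rightarrow> dfun \<Rightarrow> dfun) \<Rightarrow> bool" where
  "pn_space \<nu> \<tau> \<tau>s \<longleftrightarrow>
     triangle_function \<tau> \<and> triangle_function \<tau>s \<and> continuous_tf \<tau> \<and> continuous_tf \<tau>s
   \<and> (\<forall>F\<in>Delta_plus. \<forall>G\<in>Delta_plus. \<tau> F G \<le> \<tau>s F G)
   \<and> (\<forall>p. \<nu> p \<in> Delta_plus)
   \<and> (\<forall>p. \<nu> p = eps0 \<longleftrightarrow> p = 0)
   \<and> (\<forall>p. \<nu> (- p) = \<nu> p)
   \<and> (\<forall>p q. \<nu> (p + q) \<ge> \<tau> (\<nu> p) (\<nu> q))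
   \<and> (\<forall>p. \<forall>l::real. 0 \<le> l \<and> l \<le> 1 \<longrightarrow> \<nu> p \<le> \<tau>s (\<nu> (l *\<^sub>R p)) (\<nu> ((1 - l) *\<^sub>R p)))"

definition strongly_converges :: "('a::real_vector \<Rightarrow> dfun) \<Rightarrow> (nat \<Rightarrow> 'a) \<Rightarrow> 'a \<Rightarrow> bool" where
  "strongly_converges \<nu> ps p \<longleftrightarrow>
     (\<forall>l::real. l > 0 \<longrightarrow> (\<exists>N. \<forall>m\<ge>N. \<nu> (ps m - p) (ereal l) > 1 - l))"

definition prob_radius :: "('a \<Rightarrow> dfun) \<Rightarrow> 'a set \<Rightarrow> dfun" where
  "prob_radius \<nu> A = (\<lambda>x. if x = PInfty then 1 else if x = MInfty then 0
      else Lim (at_left (real_of_ereal x)) (\<lambda>t. Inf {\<nu> q (ereal t) | q. q \<in> A}))"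

definition D_bounded :: "('a \<Rightarrow> dfun) \<Rightarrow> 'a set \<Rightarrow> bool" where
  "D_bounded \<nu> A \<longleftrightarrow> A \<noteq> {} \<and> prob_radius \<nu> A \<in> D_plus"

end

theory Submission
  imports Defs
begin

definition ginf :: "('a \<Rightarrow> dfun) \<Rightarrow> 'a set \<Rightarrow> real \<Rightarrow> real" where
  "ginf \<nu> A t = Inf {\<nu> q (ereal t) | q. q \<in> A}"

definition Sg :: "(real \<Rightarrow> real) \<Rightarrow> real \<Rightarrow> real" where
  "Sg g x = Sup (g ` {..<x})"

lemma DP_bounds: "F \<in> Delta_plus \<Longrightarrow> 0 \<le> F x \<and> F x \<le> 1"
  by (auto simp: Delta_plus_def)

lemma DP_mono: "F \<in> Delta_plus \<Longrightarrow> x \<le> y \<Longrightarrow> F x \<le> F y"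
  by (auto simp: Delta_plus_def mono_def)

lemma DP_0: "F \<in> Delta_plus \<Longrightarrow> F 0 = 0"
  by (auto simp: Delta_plus_def)

lemma DP_inf: "F \<in> Delta_plus \<Longrightarrow> F PInfty = 1"
  by (auto simp: Delta_plus_def)

context
  fixes \<nu> :: "'a \<Rightarrow> dfun" and A :: "'a set"
  assumes nuD: "\<forall>q. \<nu> q \<in> Delta_plus" and ne: "A \<noteq> {}"
begin

lemma ginf_set_ne: "{\<nu> q (ereal t) | q. q \<in> A} \<noteq> {}"
  using ne by auto

lemma ginf_bdd: "bdd_below {\<nu> q (ereal t) | q. q \<in> A}"
  using nuD DP_bounds by (auto intro!: bdd_belowI[of _ 0])

lemma ginf_lower: "q \<in> A \<Longrightarrow> ginf \<nu> A t \<le> \<nu> q (ereal t)"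
  unfolding ginf_def by (rule cInf_lower) (use ginf_bdd in auto)

lemma ginf_greatest: "(\<And>q. q \<in> A \<Longrightarrow> c \<le> \<nu> q (ereal t)) \<Longrightarrow> c \<le> ginf \<nu> A t"
  unfolding ginf_def by (rule cInf_greatest) (use ginf_set_ne in auto)

lemma ginf_ge0: "0 \<le> ginf \<nu> A t"
  by (rule ginf_greatest) (use nuD DP_bounds in auto)

lemma ginf_le1: "ginf \<nu> A t \<le> 1"
proof -
  obtain q where "q \<in> A" using ne by auto
  then show ?thesis using ginf_lower[of q t] nuD DP_bounds[of "\<nu> q" "ereal t"] by fastforce
qed

lemma ginf_mono: "s \<le> t \<Longrightarrow> ginf \<nu> A s \<le> ginf \<nu> A t"
  by (rule ginf_greatest, rule order_trans[OF ginf_lower]) (use nuD DP_mono in auto)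

lemma ginf_neg: "t \<le> 0 \<Longrightarrow> ginf \<nu> A t = 0"
proof -
  assume t: "t \<le> 0"
  obtain q where q: "q \<in> A" using ne by auto
  have "\<nu> q (ereal t) \<le> \<nu> q 0" using nuD DP_mono t by (simp add: zero_ereal_def)
  then have "\<nu> q (ereal t) \<le> 0" using nuD DP_0 by metis
  then show ?thesis using ginf_lower[OF q, of t] ginf_ge0[of t] by linarith
qed

lemma ginf_bddA: "bdd_above (ginf \<nu> A ` S)"
  using ginf_le1 by (auto intro!: bdd_aboveI[of _ 1])

lemma Sg_upper: "t < x \<Longrightarrow> ginf \<nu> A t \<le> Sg (ginf \<nu> A) x"
  unfolding Sg_def by (rule cSup_upper) (use ginf_bddA in auto)

lemma Sg_least: "(\<And>t. t < x \<Longrightarrow> ginf \<nu> A t \<le> c) \<Longrightarrow> Sg (ginf \<nu> A) x \<le> c"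
  unfolding Sg_def by (rule cSup_least) auto

lemma Sg_ge0: "0 \<le> Sg (ginf \<nu> A) x"
  using Sg_upper[of "x - 1" x] ginf_ge0[of "x - 1"] by linarith

lemma Sg_le1: "Sg (ginf \<nu> A) x \<le> 1"
  by (rule Sg_least) (rule ginf_le1)

lemma Sg_mono: "x \<le> y \<Longrightarrow> Sg (ginf \<nu> A) x \<le> Sg (ginf \<nu> A) y"
  by (rule Sg_least, rule Sg_upper) auto

lemma Sg_tendsto: "(ginf \<nu> A \<longlongrightarrow> Sg (ginf \<nu> A) x) (at_left x)"
proof (rule order_tendstoI)
  fix a assume a: "a < Sg (ginf \<nu> A) x"
  have "\<exists>t\<in>{..<x}. a < ginf \<nu> A t"
    using a unfolding Sg_def by (subst (asm) less_cSup_iff) (use ginf_bddA in auto)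
  then obtain t where t: "t < x" "a < ginf \<nu> A t" by auto
  show "\<forall>\<^sub>F y in at_left x. a < ginf \<nu> A y"
    unfolding eventually_at_left[OF t(1)]
    using t ginf_mono by (intro exI[of _ t]) (auto intro: less_le_trans)
next
  fix a assume a: "Sg (ginf \<nu> A) x < a"
  have "x - 1 < x" by simp
  show "\<forall>\<^sub>F y in at_left x. ginf \<nu> A y < a"
    unfolding eventually_at_left[OF \<open>x - 1 < x\<close>]
    using a Sg_upper by (intro exI[of _ "x - 1"]) (auto intro: le_less_trans)
qed

lemma Sg_leftcont: "((\<lambda>y. Sg (ginf \<nu> A) y) \<longlongrightarrow> Sg (ginf \<nu> A) x) (at_left x)"
proof (rule order_tendstoI)
  fix a assume a: "a < Sg (ginf \<nu> A) x"
  have "\<exists>t\<in>{..<x}. a < ginf \<nu> A t"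
    using a unfolding Sg_def by (subst (asm) less_cSup_iff) (use ginf_bddA in auto)
  then obtain t where t: "t < x" "a < ginf \<nu> A t" by auto
  show "\<forall>\<^sub>F y in at_left x. a < Sg (ginf \<nu> A) y"
    unfolding eventually_at_left[OF t(1)]
    using t Sg_upper by (intro exI[of _ t]) (auto intro: less_le_trans)
next
  fix a assume a: "Sg (ginf \<nu> A) x < a"
  have "x - 1 < x" by simp
  show "\<forall>\<^sub>F y in at_left x. Sg (ginf \<nu> A) y < a"
    unfolding eventually_at_left[OF \<open>x - 1 < x\<close>]
  proof (intro exI[of _ "x - 1"] conjI allI impI)
    fix y assume "y < x"
    then have "Sg (ginf \<nu> A) y \<le> Sg (ginf \<nu> A) x" by (intro Sg_mono) simp
    then show "Sg (ginf \<nu> A) y < a" using a by linarith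
  qed simp
qed

lemma PR_real: "prob_radius \<nu> A (ereal x) = Sg (ginf \<nu> A) x"
proof -
  have "prob_radius \<nu> A (ereal x) = Lim (at_left x) (ginf \<nu> A)"
    unfolding prob_radius_def ginf_def by simp
  also have "\<dots> = Sg (ginf \<nu> A) x"
    by (rule tendsto_Lim) (auto intro: Sg_tendsto)
  finally show ?thesis .
qed

lemma PR_Delta: "prob_radius \<nu> A \<in> Delta_plus"
proof -
  let ?R = "prob_radius \<nu> A"
  have PI: "?R \<infinity> = 1" and MI: "?R (-\<infinity>) = 0" by (auto simp: prob_radius_def)
  have b: "0 \<le> ?R x \<and> ?R x \<le> 1" for x
    by (cases x) (auto simp: PI MI PR_real Sg_ge0 Sg_le1)
  have m: "mono ?R"
  proof (rule monoI)
    fix x y :: ereal assume "x \<le> y"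
    then show "?R x \<le> ?R y"
      by (cases x; cases y) (auto simp: PI MI PR_real Sg_ge0 Sg_le1 Sg_mono)
  qed
  have lc: "continuous (at_left x) (\<lambda>t. ?R (ereal t))" for x :: real
    unfolding PR_real continuous_within using Sg_leftcont by simp
  have z: "?R 0 = 0"
  proof -
    have "Sg (ginf \<nu> A) 0 \<le> 0" by (rule Sg_least) (simp add: ginf_neg)
    then show ?thesis using PR_real[of 0] Sg_ge0[of 0] by (simp add: zero_ereal_def)
  qed
  show ?thesis unfolding Delta_plus_def using b m lc z PI by auto
qed

lemma PR_le: "q \<in> A \<Longrightarrow> prob_radius \<nu> A \<le> \<nu> q"
proof (rule le_funI)
  fix x assume q: "q \<in> A"
  show "prob_radius \<nu> A x \<le> \<nu> q x"
  proof (cases x)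
    case (real r)
    have "Sg (ginf \<nu> A) r \<le> \<nu> q (ereal r)"
      by (rule Sg_least, rule order_trans[OF ginf_lower[OF q]]) (use nuD DP_mono in auto)
    then show ?thesis using real PR_real by simp
  next
    case PInf then show ?thesis using nuD DP_inf[of "\<nu> q"] by (simp add: prob_radius_def)
  next
    case MInf then show ?thesis using nuD DP_bounds[of "\<nu> q"] by (simp add: prob_radius_def)
  qed
qed

lemma PR_D: assumes "(ginf \<nu> A \<longlongrightarrow> 1) at_top" shows "prob_radius \<nu> A \<in> D_plus"
proof -
  have "((\<lambda>t. Sg (ginf \<nu> A) t) \<longlongrightarrow> 1) at_top"
  proof (rule order_tendstoI)
    fix a :: real assume "a < 1"
    then have "\<forall>\<^sub>F t in at_top. a < ginf \<nu> A t" using assms order_tendstoD by blast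
    then obtain T where T: "\<And>t. t \<ge> T \<Longrightarrow> a < ginf \<nu> A t" by (auto simp: eventually_at_top_linorder)
    show "\<forall>\<^sub>F t in at_top. a < Sg (ginf \<nu> A) t"
      unfolding eventually_at_top_linorder
      using T[of T] Sg_upper[of T] by (intro exI[of _ "T + 1"]) (auto intro: less_le_trans)
  next
    fix a :: real assume "1 < a"
    then show "\<forall>\<^sub>F t in at_top. Sg (ginf \<nu> A) t < a" using Sg_le1 by (intro always_eventually allI) (auto intro: le_less_trans)
  qed
  then show ?thesis unfolding D_plus_def using PR_Delta by (simp add: PR_real)
qed

end


theorem theorem22:
  fixes \<nu> :: "'a::real_vector \<Rightarrow> dfun" and \<tau> \<tau>s :: "dfun \<Rightarrow> dfun \<Rightarrow> dfun"
    and ps :: "nat \<Rightarrow> 'a" and p :: 'a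
  assumes "pn_space \<nu> \<tau> \<tau>s"
    and "\<forall>q. \<nu> q \<in> D_plus"
    and "\<forall>F\<in>D_plus. \<forall>G\<in>D_plus. \<tau> F G \<in> D_plus"
    and "strongly_converges \<nu> ps p"
  shows "D_bounded \<nu> (range ps)"
proof -
  have pn_tf: "triangle_function \<tau>"
    using assms(1) unfolding pn_space_def by (elim conjE) assumption
  have nuD: "\<forall>q. \<nu> q \<in> Delta_plus"
    using assms(1) unfolding pn_space_def by (elim conjE) assumption
  have tri0: "\<forall>p q. \<nu> (p + q) \<ge> \<tau> (\<nu> p) (\<nu> q)"
    using assms(1) unfolding pn_space_def by (elim conjE) assumption
  have nuDp: "((\<lambda>t. \<nu> q (ereal t)) \<longlongrightarrow> 1) at_top" for q
    using assms(2) unfolding D_plus_def by blast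
  have tri: "\<nu> (a + b) \<ge> \<tau> (\<nu> a) (\<nu> b)" for a b using tri0 by blast
  have tmono: "\<And>F F' G. F \<in> Delta_plus \<Longrightarrow> F' \<in> Delta_plus \<Longrightarrow> G \<in> Delta_plus \<Longrightarrow> F \<le> F' \<Longrightarrow> \<tau> F G \<le> \<tau> F' G"
    using pn_tf unfolding triangle_function_def by (elim conjE) blast
  define B where "B = range (\<lambda>m. ps m - p)"
  have Bne: "B \<noteq> {}" by (auto simp: B_def)
  have gB: "(ginf \<nu> B \<longlongrightarrow> 1) at_top"
  proof (rule order_tendstoI)
    fix a :: real assume "1 < a"
    then show "\<forall>\<^sub>F t in at_top. ginf \<nu> B t < a"
      using ginf_le1[OF nuD Bne] by (intro always_eventually allI) (auto intro: le_less_trans)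
  next
    fix a :: real assume a1: "a < 1"
    define a' where "a' = (a + 1) / 2"
    have a': "a < a'" "a' < 1" using a1 by (auto simp: a'_def)
    obtain N where N: "\<And>m. m \<ge> N \<Longrightarrow> \<nu> (ps m - p) (ereal (1 - a')) > 1 - (1 - a')"
      using assms(4) a' unfolding strongly_converges_def by (meson diff_gt_0_iff_gt)
    have "\<forall>m\<in>{..<N}. \<forall>\<^sub>F t in at_top. a' < \<nu> (ps m - p) (ereal t)"
      using nuDp a' order_tendstoD by blast
    then have ev: "\<forall>\<^sub>F t in at_top. \<forall>m\<in>{..<N}. a' < \<nu> (ps m - p) (ereal t)"
      by (rule eventually_ball_finite[rotated]) simp
    have "\<forall>\<^sub>F t in at_top. t \<ge> 1 - a'" by (rule eventually_ge_at_top)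
    with ev have "\<forall>\<^sub>F t in at_top. a' \<le> ginf \<nu> B t"
    proof (rule eventually_elim2)
      fix t assume h1: "\<forall>m\<in>{..<N}. a' < \<nu> (ps m - p) (ereal t)" and h2: "1 - a' \<le> t"
      show "a' \<le> ginf \<nu> B t"
      proof (rule ginf_greatest[OF nuD Bne])
        fix q assume "q \<in> B"
        then obtain m where q: "q = ps m - p" by (auto simp: B_def)
        show "a' \<le> \<nu> q (ereal t)"
        proof (cases "m < N")
          case True then show ?thesis using h1 q by (auto intro: less_imp_le)
        next
          case False
          then have "\<nu> q (ereal (1 - a')) > a'" using N q by auto
          moreover have "\<nu> q (ereal (1 - a')) \<le> \<nu> q (ereal t)"
            using DP_mono nuD h2 by simp
          ultimately show ?thesis by linarith
        qed
      qed
    qed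
    then show "\<forall>\<^sub>F t in at_top. a < ginf \<nu> B t"
      by eventually_elim (use a' in linarith)
  qed
  define H where "H = prob_radius \<nu> B"
  have HD: "H \<in> D_plus" unfolding H_def by (rule PR_D[OF nuD Bne gB])
  have HDD: "H \<in> Delta_plus" unfolding H_def by (rule PR_Delta[OF nuD Bne])
  define F where "F = \<tau> H (\<nu> p)"
  have FD: "F \<in> D_plus" unfolding F_def using assms(3) HD assms(2) by blast
  have Fle: "F \<le> \<nu> (ps m)" for m
  proof -
    have "H \<le> \<nu> (ps m - p)" unfolding H_def by (rule PR_le[OF nuD Bne]) (auto simp: B_def)
    then have "F \<le> \<tau> (\<nu> (ps m - p)) (\<nu> p)" unfolding F_def using tmono HDD nuD by blast
    also have "\<dots> \<le> \<nu> (ps m - p + p)" by (rule tri)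
    finally show ?thesis by simp
  qed
  have Ane: "range ps \<noteq> {}" by simp
  have Flim: "((\<lambda>t. F (ereal t)) \<longlongrightarrow> 1) at_top" using FD unfolding D_plus_def by blast
  have "(ginf \<nu> (range ps) \<longlongrightarrow> 1) at_top"
  proof (rule tendsto_sandwich[OF _ _ Flim tendsto_const])
    show "\<forall>\<^sub>F t in at_top. F (ereal t) \<le> ginf \<nu> (range ps) t"
      using Fle by (intro always_eventually allI ginf_greatest[OF nuD Ane]) (auto simp: le_fun_def)
    show "\<forall>\<^sub>F t in at_top. ginf \<nu> (range ps) t \<le> 1"
      using ginf_le1[OF nuD Ane] by (intro always_eventually allI) auto
  qed
  then show ?thesis unfolding D_bounded_def using PR_D[OF nuD Ane] by simp
qed

end
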